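(* Assume $\mathrm{recc}(C)\subseteq\mathrm{recc}(P^B)$ and fix $k\in N_2$. If $N_0\subseteq J$, then there exists $\epsilon>0$ such that $\bar x+\epsilon\bar r^j\in S_k^C$ for all $j\in N$.
   Context: Let $A\in\mathbb{R}^{m\times n}$ have full row rank, $b\in\mathbb{R}^m$, and $P=\{x\in\mathbb{R}^n_+:Ax=b\}$. Let $C\subseteq\mathbb{R}^n$ be an open convex set. Fix a basis $B$ of $P$ with nonbasic set $N=\{1,\dots,n\}\setminus B$. Write $P=\{x:x_i=\bar b_i-\sum_{j\in N}\bar a_{ij}x_j\ (i\in B),\ x\ge0\}$ with $\bar b\ge0$. The basic solution $\bar x$ has $\bar x_i=\bar b_i$ ($i\in B$) and $0$ ($i\in N$). $P^B$ is obtained by dropping $x_i\ge0$ for $i\in B$. For $j\in N$, $\bar r^j$ has $\bar r^j_k=-\bar a_{kj}$ ($k\in B$), $\bar r^j_j=1$, and $0$ otherwise. Thus $P^B=\{\bar x+\sum_{j\in N}x_j\bar r^j:x_j\ge0\}$. It is assumed that $\bar x\notin\mathrm{cl}(C)$. For $j\in N$, $\alpha_j=\inf\{\lambda\ge0:\bar x+\lambda\bar r^j\in C\}$ and $\beta_j=\sup\{\lambda\ge0:\bar x+\lambda\bar r^j\in C\}$, with $\alpha_j=+\infty$, $\beta_j=-\infty$ if the halfline misses $C$. The set $N$ is partitioned into - $N_0=\{j:\alpha_j=+\infty,\beta_j=-\infty\}$, - $N_1=\{j:\alpha_j\in(0,\infty),\beta_j=+\infty\}$, - $N_2=\{j:\alpha_j\in(0,\infty),\beta_j\in(\alpha_j,\infty)\}$.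 For a set $K$, $\mathrm{recc}(K)=\{d:x+\lambda d\in K\ \forall x\in K,\lambda\ge0\}$. For $k\in N_2$, $S_k^C=\{\bar x\}+\mathrm{conv}\big(\bigcup_{j\in N_2}\{\lambda\bar r^j:0\le\lambda<\beta_j\}\big)+\{\lambda\bar r^k:\lambda\le0\}+\mathrm{recc}(C)$, and $J=\{i\in N:\bar r^i\in\mathrm{recc}(S_k^C)\}$. *)

theory Defs
  imports "HOL-Analysis.Analysis"
begin

text \<open>Index set {1..n} is modelled by a finite type 'n, {1..m} by a finite type 'm.
  A :: real^'n^'m is an m x n matrix; vectors of R^n are real^'n.\<close>

definition polyP :: "real^'n^'m \<Rightarrow> real^'m \<Rightarrow> (real^'n) set" where
  "polyP A b = {x. (\<forall>i. 0 \<le> x $ i) \<and> A *v x = b}"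

definition is_basis :: "real^'n^'m \<Rightarrow> 'n set \<Rightarrow> bool" where
  "is_basis A B \<longleftrightarrow> card B = CARD('m) \<and>
     (\<forall>c. (\<Sum>i\<in>B. c i *s column i A) = 0 \<longrightarrow> (\<forall>i\<in>B. c i = 0))"

definition xbar :: "real^'n^'m \<Rightarrow> real^'m \<Rightarrow> 'n set \<Rightarrow> real^'n" where
  "xbar A b B = (THE x. A *v x = b \<and> (\<forall>i. i \<notin> B \<longrightarrow> x $ i = 0))"

definition is_basis_of_P :: "real^'n^'m \<Rightarrow> real^'m \<Rightarrow> 'n set \<Rightarrow> bool" where
  "is_basis_of_P A b B \<longleftrightarrow> is_basis A B \<and> (\<forall>i. 0 \<le> xbar A b B $ i)"

text \<open>Tableau ray rbar^j: entries -abar_kj at basic k, 1 at j, 0 at other nonbasic indices;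
  equivalently the unique r with A r = 0, r_j = 1 and r_l = 0 for nonbasic l \<noteq> j.\<close>
definition rbar :: "real^'n^'m \<Rightarrow> 'n set \<Rightarrow> 'n \<Rightarrow> real^'n" where
  "rbar A B j = (THE r. A *v r = 0 \<and> r $ j = 1 \<and> (\<forall>l. l \<notin> B \<and> l \<noteq> j \<longrightarrow> r $ l = 0))"

definition polyPB :: "real^'n^'m \<Rightarrow> real^'m \<Rightarrow> 'n set \<Rightarrow> (real^'n) set" where
  "polyPB A b B = {x. A *v x = b \<and> (\<forall>i. i \<notin> B \<longrightarrow> 0 \<le> x $ i)}"

definition recc :: "(real^'n) set \<Rightarrow> (real^'n) set" where
  "recc K = {d. \<forall>x\<in>K. \<forall>t::real. t \<ge> 0 \<longrightarrow> x + t *\<^sub>R d \<in> K}"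

text \<open>alpha/beta in the extended reals: Inf {} = +infinity, Sup {} = -infinity.\<close>
definition alpha :: "(real^'n) set \<Rightarrow> real^'n \<Rightarrow> real^'n \<Rightarrow> ereal" where
  "alpha C x r = Inf (ereal ` {t. t \<ge> 0 \<and> x + t *\<^sub>R r \<in> C})"

definition beta :: "(real^'n) set \<Rightarrow> real^'n \<Rightarrow> real^'n \<Rightarrow> ereal" where
  "beta C x r = Sup (ereal ` {t. t \<ge> 0 \<and> x + t *\<^sub>R r \<in> C})"

definition N0 :: "real^'n^'m \<Rightarrow> real^'m \<Rightarrow> 'n set \<Rightarrow> (real^'n) set \<Rightarrow> 'n set" where
  "N0 A b B C = {j. j \<notin> B \<and> alpha C (xbar A b B) (rbar A B j) = \<infinity>
                         \<and> beta C (xbar A b B) (rbar A B j) = -\<infinity>}"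

definition N1 :: "real^'n^'m \<Rightarrow> real^'m \<Rightarrow> 'n set \<Rightarrow> (real^'n) set \<Rightarrow> 'n set" where
  "N1 A b B C = {j. j \<notin> B \<and> 0 < alpha C (xbar A b B) (rbar A B j)
                         \<and> alpha C (xbar A b B) (rbar A B j) < \<infinity>
                         \<and> beta C (xbar A b B) (rbar A B j) = \<infinity>}"

definition N2 :: "real^'n^'m \<Rightarrow> real^'m \<Rightarrow> 'n set \<Rightarrow> (real^'n) set \<Rightarrow> 'n set" where
  "N2 A b B C = {j. j \<notin> B \<and> 0 < alpha C (xbar A b B) (rbar A B j)
                         \<and> alpha C (xbar A b B) (rbar A B j) < \<infinity>
                         \<and> alpha C (xbar A b B) (rbar A B j) < beta C (xbar A b B) (rbar A B j)
                         \<and> beta C (xbar A b B) (rbar A B j) < \<infinity>}"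

definition SkC :: "real^'n^'m \<Rightarrow> real^'m \<Rightarrow> 'n set \<Rightarrow> (real^'n) set \<Rightarrow> 'n \<Rightarrow> (real^'n) set" where
  "SkC A b B C k =
     {xbar A b B + u + v + w | u v w.
        u \<in> convex hull (\<Union>j\<in>N2 A b B C.
               {t *\<^sub>R rbar A B j | t. 0 \<le> t \<and> ereal t < beta C (xbar A b B) (rbar A B j)})
      \<and> v \<in> {t *\<^sub>R rbar A B k | t. t \<le> 0}
      \<and> w \<in> recc C}"

definition Jset :: "real^'n^'m \<Rightarrow> real^'m \<Rightarrow> 'n set \<Rightarrow> (real^'n) set \<Rightarrow> 'n \<Rightarrow> 'n set" where
  "Jset A b B C k = {i. i \<notin> B \<and> rbar A B i \<in> recc (SkC A b B C k)}"

end

theory Submission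
  imports Defs
begin

lemma ray_recc:
  fixes C :: "(real^'n) set"
  assumes oC: "open C" and cC: "convex C" and H: "\<forall>t\<ge>0. w + t *\<^sub>R r \<in> C"
  shows "r \<in> recc C"
  unfolding recc_def
proof (intro CollectI ballI allI impI)
  fix y s assume y: "y \<in> C" and s: "(s::real) \<ge> 0"
  show "y + s *\<^sub>R r \<in> C"
  proof (cases "s = 0")
    case True then show ?thesis using y by simp
  next
    case False
    with s have s0: "s > 0" by simp
    obtain e where e: "e > 0" "ball y e \<subseteq> C" using oC y open_contains_ball by blast
    define l where "l = min (1/2) (e / (4 * (norm (y - w) + 1)))"
    have l0: "l > 0" using e by (simp add: l_def) (smt (verit) divide_pos_pos norm_ge_zero)
    have l1: "l \<le> 1/2" unfolding l_def by (rule min.cobounded1)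
    have l2: "l * (norm (y - w) + 1) \<le> e/4"
    proof -
      have "l \<le> e / (4 * (norm (y - w) + 1))" unfolding l_def by (rule min.cobounded2)
      moreover have "4 * (norm (y - w) + 1) > 0" by (smt (verit) norm_ge_zero)
      ultimately have "l * (4 * (norm (y - w) + 1)) \<le> e" by (simp add: pos_le_divide_eq)
      then show ?thesis by (simp add: algebra_simps)
    qed
    define y' where "y' = (1/(1-l)) *\<^sub>R (y - l *\<^sub>R w)"
    have q: "1/(1-l) = 1 + l/(1-l)" using l1 by (simp add: field_simps)
    have "y' - y = (l/(1-l)) *\<^sub>R (y - w)"
    proof -
      have q2: "l/(1-l) = l + l*l/(1-l)" using l1 by (simp add: field_simps)
      show ?thesis unfolding y'_def q by (simp add: algebra_simps) (metis q2 scaleR_left_distrib)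
    qed
    then have "dist y' y = (l/(1-l)) * norm (y - w)"
      using l0 l1 by (simp add: dist_norm)
    also have "\<dots> \<le> 2 * l * norm (y - w)"
    proof -
      have "l/(1-l) \<le> 2*l" using l0 l1 by (simp add: field_simps)
      then have "l/(1-l) * norm (y - w) \<le> 2 * l * norm (y - w)" by (rule mult_right_mono) simp
      then show ?thesis by simp
    qed
    also have "\<dots> < e" proof -
      have "l * norm (y - w) \<le> l * (norm (y - w) + 1)" using l0 by simp
      then show ?thesis using l2 e by linarith
    qed
    finally have "y' \<in> C" using e by (auto simp: dist_commute)
    moreover have "w + (s/l) *\<^sub>R r \<in> C" using H s l0 by simp
    ultimately have "(1 - l) *\<^sub>R y' + l *\<^sub>R (w + (s/l) *\<^sub>R r) \<in> C"
      using cC l0 l1 by (intro convexD) auto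
    moreover have "(1 - l) *\<^sub>R y' + l *\<^sub>R (w + (s/l) *\<^sub>R r) = y + s *\<^sub>R r"
    proof -
      have "(1 - l) *\<^sub>R y' = y - l *\<^sub>R w" using l1 by (simp add: y'_def)
      moreover have "l *\<^sub>R (w + (s/l) *\<^sub>R r) = l *\<^sub>R w + s *\<^sub>R r" using l0 by (simp add: scaleR_add_right)
      ultimately show ?thesis by simp
    qed
    ultimately show ?thesis by simp
  qed
qed

lemma seg_pt:
  fixes x r :: "real^'n"
  assumes cC: "convex C" and a: "x + t0 *\<^sub>R r \<in> C" and b: "x + t1 *\<^sub>R r \<in> C"
    and t: "t0 \<le> t" "t \<le> t1"
  shows "x + t *\<^sub>R r \<in> C"
proof (cases "t1 = t0")
  case True then show ?thesis using a t by simp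
next
  case False
  then have d: "t1 - t0 > 0" using t by simp
  define u where "u = (t - t0) / (t1 - t0)"
  have u0: "0 \<le> u" "u \<le> 1" using d t by (auto simp: u_def field_simps)
  have "(1 - u) *\<^sub>R (x + t0 *\<^sub>R r) + u *\<^sub>R (x + t1 *\<^sub>R r) \<in> C"
    using convexD[OF cC a b, of "1-u" u] u0 by simp
  moreover have "u * (t1 - t0) = t - t0" using d by (simp add: u_def)
  then have "(1 - u) * t0 + u * t1 = t" by (simp add: algebra_simps)
  then have "(1 - u) *\<^sub>R (x + t0 *\<^sub>R r) + u *\<^sub>R (x + t1 *\<^sub>R r) = x + t *\<^sub>R r"
    by (simp add: algebra_simps scaleR_add_right flip: scaleR_left_distrib)
  ultimately show ?thesis by simp
qed

lemma classify:
  fixes C :: "(real^'n) set" and x r :: "real^'n"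
  assumes oC: "open C" and cC: "convex C" and xn: "x \<notin> closure C"
  shows "(alpha C x r = \<infinity> \<and> beta C x r = -\<infinity>) \<or> (beta C x r = \<infinity> \<and> r \<in> recc C) \<or>
    (0 < alpha C x r \<and> alpha C x r < \<infinity> \<and> alpha C x r < beta C x r \<and> beta C x r < \<infinity>)"
proof -
  define T where "T = {t. t \<ge> 0 \<and> x + t *\<^sub>R r \<in> C}"
  have al: "alpha C x r = Inf (ereal ` T)" by (simp add: alpha_def T_def)
  have be: "beta C x r = Sup (ereal ` T)" by (simp add: beta_def T_def)
  show ?thesis
  proof (cases "T = {}")
    case True then show ?thesis by (simp add: al be top_ereal_def bot_ereal_def)
  next
    case False
    then obtain t0 where t0: "t0 \<in> T" by blast
    have xC: "x \<notin> C" using xn closure_subset by blast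
    then have t0p: "t0 > 0" using t0 by (cases "t0 = 0") (auto simp: T_def)
    have t0C: "x + t0 *\<^sub>R r \<in> C" using t0 by (simp add: T_def)
    obtain d where d: "d > 0" "ball (x + t0 *\<^sub>R r) d \<subseteq> C" using oC t0C open_contains_ball by blast
    define h where "h = min (t0/2) (d / (2 * (norm r + 1)))"
    have nr: "norm r + 1 > 0" by (smt (verit) norm_ge_zero)
    have h0: "h > 0" using t0p d nr by (simp add: h_def)
    have h1: "h \<le> t0/2" unfolding h_def by (rule min.cobounded1)
    have h2: "h * (norm r + 1) \<le> d/2"
    proof -
      have "h \<le> d / (2 * (norm r + 1))" unfolding h_def by (rule min.cobounded2)
      then have "h * (2 * (norm r + 1)) \<le> d" using nr by (simp add: pos_le_divide_eq)
      then show ?thesis by (simp add: algebra_simps)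
    qed
    have "dist (x + (t0 - h) *\<^sub>R r) (x + t0 *\<^sub>R r) = h * norm r"
      using h0 by (simp add: dist_norm algebra_simps)
    also have "\<dots> < d" proof -
      have "h * norm r \<le> h * (norm r + 1)" using h0 by simp
      then show ?thesis using h2 d by linarith
    qed
    finally have "x + (t0 - h) *\<^sub>R r \<in> C" using d by (auto simp: dist_commute)
    then have t0h: "t0 - h \<in> T" using h1 t0p by (simp add: T_def)
    have A1: "alpha C x r \<le> ereal (t0 - h)" unfolding al using t0h by (simp add: INF_lower)
    have B1: "ereal t0 \<le> beta C x r" unfolding be using t0 by (simp add: SUP_upper)
    have hh: "ereal (t0 - h) < ereal t0" using h0 by simp
    have "alpha C x r < ereal t0" by (rule order.strict_trans1[OF A1 hh])
    then have alt: "alpha C x r < beta C x r" by (rule order.strict_trans2[OF _ B1])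
    have alinf: "alpha C x r < \<infinity>" using A1 by (cases "alpha C x r") auto
    have alpos: "0 < alpha C x r"
    proof (rule ccontr)
      assume "\<not> 0 < alpha C x r"
      then have le: "alpha C x r \<le> 0" by simp
      have "x \<in> closure C"
        unfolding closure_approachable
      proof (intro allI impI)
        fix e :: real assume e: "e > 0"
        have "alpha C x r < ereal (e / (norm r + 1))" 
          using le by (rule order.strict_trans1) (simp add: e nr)
        then obtain t where t: "t \<in> T" "t < e / (norm r + 1)"
          unfolding al Inf_less_iff by auto
        have tt: "t \<ge> 0" using t by (simp add: T_def)
        have "dist (x + t *\<^sub>R r) x = t * norm r" using tt by (simp add: dist_norm)
        also have "\<dots> \<le> t * (norm r + 1)" using tt by (simp add: distrib_left)
        also have "\<dots> < e" using t nr by (simp add: pos_less_divide_eq)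
        finally show "\<exists>y\<in>C. dist y x < e" using t by (auto simp: T_def)
      qed
      then show False using xn by simp
    qed
    show ?thesis
    proof (cases "beta C x r = \<infinity>")
      case True
      have "r \<in> recc C"
      proof (rule ray_recc[OF oC cC, of "x + t0 *\<^sub>R r"], intro allI impI)
        fix t :: real assume t: "t \<ge> 0"
        have "ereal (t0 + t) < beta C x r" using True by simp
        then obtain t1 where t1: "t1 \<in> T" "t0 + t < t1" unfolding be less_Sup_iff by auto
        have "x + (t0 + t) *\<^sub>R r \<in> C"
          by (rule seg_pt[OF cC t0C, of t1]) (use t1 t in \<open>auto simp: T_def\<close>)
        then show "x + t0 *\<^sub>R r + t *\<^sub>R r \<in> C" by (simp add: algebra_simps)
      qed
      then show ?thesis using True by simp
    next
      case False
      then have "beta C x r < \<infinity>" by (simp add: less_top[symmetric])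
      then show ?thesis using alpos alinf alt by simp
    qed
  qed
qed

theorem corollary2:
  fixes A :: "real^'n^'m" and b :: "real^'m" and B :: "'n set"
    and C :: "(real^'n) set" and k :: 'n
  assumes full_row_rank: "rank A = CARD('m)"
    and basis: "is_basis_of_P A b B"
    and C_open: "open C" and C_convex: "convex C"
    and xbar_notin: "xbar A b B \<notin> closure C"
    and recc_sub: "recc C \<subseteq> recc (polyPB A b B)"
    and k_N2: "k \<in> N2 A b B C"
    and N0_J: "N0 A b B C \<subseteq> Jset A b B C k"
  shows "\<exists>\<epsilon>>0. \<forall>j. j \<notin> B \<longrightarrow> xbar A b B + \<epsilon> *\<^sub>R rbar A B j \<in> SkC A b B C k"
proof -
  define x where "x = xbar A b B"
  define R where "R = rbar A B"
  define be where "be j = beta C x (R j)" for j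
  define H where "H = (\<Union>j\<in>N2 A b B C. {t *\<^sub>R R j | t. 0 \<le> t \<and> ereal t < be j})"
  have memS: "x + u + v + w \<in> SkC A b B C k"
    if "u \<in> convex hull H" "v \<in> {t *\<^sub>R R k | t. t \<le> 0}" "w \<in> recc C" for u v w
    using that unfolding SkC_def H_def x_def R_def be_def by blast
  have r0: "0 \<in> recc C" by (simp add: recc_def)
  have rcone: "e *\<^sub>R r \<in> recc C" if "r \<in> recc C" "e \<ge> 0" for r e
    using that unfolding recc_def by (auto simp: scaleR_scaleR mult_nonneg_nonneg)
  have v0: "0 \<in> {t *\<^sub>R R k | t. t \<le> 0}" by (rule CollectI, rule exI[of _ 0]) simp
  have N2pos: "0 < be j \<and> be j < \<infinity>" if "j \<in> N2 A b B C" for j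
    using that unfolding N2_def be_def x_def R_def
    by (auto intro: order.strict_trans)
  have hullH: "t *\<^sub>R R j \<in> convex hull H" if "j \<in> N2 A b B C" "0 \<le> t" "ereal t < be j" for j t
    by (rule hull_inc) (use that in \<open>auto simp: H_def\<close>)
  have xS: "x \<in> SkC A b B C k"
  proof -
    have "0 *\<^sub>R R k \<in> convex hull H" using N2pos[OF k_N2] by (intro hullH[OF k_N2]) (auto simp: zero_ereal_def)
    then have h0: "0 \<in> convex hull H" by simp
    have "x + 0 + 0 + 0 \<in> SkC A b B C k" by (rule memS[OF h0 v0 r0])
    then show ?thesis by simp
  qed
  have h0: "0 \<in> convex hull H" using N2pos[OF k_N2] hullH[OF k_N2, of 0] by (simp add: zero_ereal_def)
  define \<epsilon> where "\<epsilon> = Min (insert 1 ((\<lambda>j. real_of_ereal (be j) / 2) ` N2 A b B C))"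
  have epos: "\<epsilon> > 0" unfolding \<epsilon>_def
  proof (subst Min_gr_iff)
    show "\<forall>a\<in>insert 1 ((\<lambda>j. real_of_ereal (be j) / 2) ` N2 A b B C). 0 < a"
    proof
      fix a assume "a \<in> insert 1 ((\<lambda>j. real_of_ereal (be j) / 2) ` N2 A b B C)"
      then consider "a = 1" | j where "j \<in> N2 A b B C" "a = real_of_ereal (be j) / 2" by auto
      then show "0 < a"
      proof cases
        case 2
        then show ?thesis using N2pos[OF 2(1)] by (cases "be j") auto
      qed simp
    qed
  qed auto
  have eN2: "ereal \<epsilon> < be j" if "j \<in> N2 A b B C" for j
  proof -
    have "\<epsilon> \<le> real_of_ereal (be j) / 2" unfolding \<epsilon>_def using that by (intro Min_le) auto
    then show ?thesis using N2pos[OF that] by (cases "be j") auto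
  qed
  have "\<forall>j. j \<notin> B \<longrightarrow> x + \<epsilon> *\<^sub>R R j \<in> SkC A b B C k"
  proof (intro allI impI)
    fix j assume jB: "j \<notin> B"
    from classify[OF C_open C_convex xbar_notin[folded x_def], of "R j"]
    consider (c0) "alpha C x (R j) = \<infinity> \<and> beta C x (R j) = -\<infinity>"
      | (c1) "R j \<in> recc C"
      | (c2) "0 < alpha C x (R j) \<and> alpha C x (R j) < \<infinity> \<and> alpha C x (R j) < beta C x (R j) \<and> beta C x (R j) < \<infinity>"
      by blast
    then show "x + \<epsilon> *\<^sub>R R j \<in> SkC A b B C k"
    proof cases
      case c0
      then have "j \<in> N0 A b B C" using jB by (simp add: N0_def x_def R_def)
      then have "R j \<in> recc (SkC A b B C k)" using N0_J by (auto simp: Jset_def R_def)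
      then show ?thesis using xS epos unfolding recc_def by auto
    next
      case c1
      then have "x + 0 + 0 + \<epsilon> *\<^sub>R R j \<in> SkC A b B C k"
        using memS[OF h0 v0 rcone[OF c1]] epos by simp
      then show ?thesis by simp
    next
      case c2
      then have jN: "j \<in> N2 A b B C" using jB by (simp add: N2_def x_def R_def)
      have "x + \<epsilon> *\<^sub>R R j + 0 + 0 \<in> SkC A b B C k"
        using memS[OF hullH[OF jN _ eN2[OF jN]] v0 r0] epos by simp
      then show ?thesis by simp
    qed
  qed
  then show ?thesis using epos unfolding x_def R_def by blast
qed

end
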